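(* Let $n\ge3$, let the sites of an $n$-qubit chain be partitioned into nonempty consecutive intervals $L=\{1,\dots,a\}$, $C=\{a+1,\dots,a+k\}$, $R=\{a+k+1,\dots,n\}$, and let $W\in\mathrm{Sp}(2n,\mathbb{Z}_2)$ be the symplectic matrix of a Clifford unitary satisfying the left wall condition around $C$. Then $G_{\mathrm{left}}$ and $G_{\mathrm{right}}$ are $J$-orthogonal: $g^TJg'=0$ for all $g\in G_{\mathrm{left}}$, $g'\in G_{\mathrm{right}}$. Equivalently, the Pauli subgroups on $C$ corresponding to $G_{\mathrm{left}}$ and $G_{\mathrm{right}}$ pairwise commute.
   Context: Pauli operators modulo phases are identified with $\mathbb{Z}_2^{2n}$ via $(p_1,q_1,\dots,p_n,q_n)\mapsto X^{p_1}Z^{q_1}\otimes\cdots\otimes X^{p_n}Z^{q_n}$; symplectic form $J=\bigoplus_{i=1}^n\begin{pmatrix}0&1\\1&0\end{pmatrix}$ (Paulis commute iff $b^TJb'=0$); $\mathrm{Sp}(2n,\mathbb{Z}_2)=\{S:SJS^T=J\}$. $V_S$ denotes vectors supported on the site set $S$, $\mathbb{Z}_2^{2n}=V_L\oplus V_C\oplus V_R$, vectors $(l,c,r)$, $\pi_C$ the projection onto $V_C$. Left wall condition: for all $t\ge1$, $l\in V_L$: $W^t(l,0,0)\in V_L\oplus V_C\oplus\{0\}$. Internal subspaces: $G_{\mathrm{left}}=\pi_C(\mathrm{span}\{W^t(l,0,0):t\ge0,l\in V_L\})$, $G_{\mathrm{right}}=\pi_C(\mathrm{span}\{W^t(0,0,r):t\ge0,r\in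 V_R\})$. *)

theory Defs
  imports Main "HOL-Library.Z2"
begin

text \<open>Conventions: n qubits, sites indexed 0..n-1 (site s is the paper's site s+1).
Vectors in Z_2^{2n} are functions nat => bit vanishing at indices >= 2n;
coordinate 2s is p_s (X-part) and 2s+1 is q_s (Z-part) of site s.
Matrices are functions nat => nat => bit; only entries with indices < 2n matter.\<close>

definition vecs :: "nat \<Rightarrow> (nat \<Rightarrow> bit) set" where
  "vecs n = {v. \<forall>i\<ge>2*n. v i = 0}"

definition Jmat :: "nat \<Rightarrow> nat \<Rightarrow> nat \<Rightarrow> bit" where
  "Jmat n i j = (if i < 2*n \<and> j < 2*n \<and> i div 2 = j div 2 \<and> i \<noteq> j then 1 else 0)"

definition symp_form :: "nat \<Rightarrow> (nat \<Rightarrow> bit) \<Rightarrow> (nat \<Rightarrow> bit) \<Rightarrow> bit" where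
  "symp_form n b b' = (\<Sum>i<2*n. \<Sum>j<2*n. b i * Jmat n i j * b' j)"

definition symplectic :: "nat \<Rightarrow> (nat \<Rightarrow> nat \<Rightarrow> bit) \<Rightarrow> bool" where
  "symplectic n S \<longleftrightarrow>
     (\<forall>i<2*n. \<forall>j<2*n. (\<Sum>l<2*n. \<Sum>m<2*n. S i l * Jmat n l m * S j m) = Jmat n i j)"

definition mulv :: "nat \<Rightarrow> (nat \<Rightarrow> nat \<Rightarrow> bit) \<Rightarrow> (nat \<Rightarrow> bit) \<Rightarrow> (nat \<Rightarrow> bit)" where
  "mulv n W v = (\<lambda>i. if i < 2*n then (\<Sum>j<2*n. W i j * v j) else 0)"

definition supp_on :: "nat \<Rightarrow> nat set \<Rightarrow> (nat \<Rightarrow> bit) set" where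
  "supp_on n S = {v \<in> vecs n. \<forall>i. v i \<noteq> 0 \<longrightarrow> i div 2 \<in> S}"

definition projS :: "nat set \<Rightarrow> (nat \<Rightarrow> bit) \<Rightarrow> (nat \<Rightarrow> bit)" where
  "projS S v = (\<lambda>i. if i div 2 \<in> S then v i else 0)"

definition span2 :: "(nat \<Rightarrow> bit) set \<Rightarrow> (nat \<Rightarrow> bit) set" where
  "span2 A = {v. \<exists>m (c :: nat \<Rightarrow> bit) u. (\<forall>i<m. u i \<in> A) \<and>
                   v = (\<lambda>x. \<Sum>i<m. c i * u i x)}"

definition sitesL :: "nat \<Rightarrow> nat set" where "sitesL a = {..<a}"
definition sitesC :: "nat \<Rightarrow> nat \<Rightarrow> nat set" where "sitesC a k = {a..<a+k}"
definition sitesR :: "nat \<Rightarrow> nat \<Rightarrow> nat \<Rightarrow> nat set" where "sitesR n a k = {a+k..<n}"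

definition left_wall :: "nat \<Rightarrow> nat \<Rightarrow> nat \<Rightarrow> (nat \<Rightarrow> nat \<Rightarrow> bit) \<Rightarrow> bool" where
  "left_wall n a k W \<longleftrightarrow>
     (\<forall>t\<ge>1. \<forall>l\<in>supp_on n (sitesL a). (mulv n W ^^ t) l \<in> supp_on n (sitesL a \<union> sitesC a k))"

definition G_left :: "nat \<Rightarrow> nat \<Rightarrow> nat \<Rightarrow> (nat \<Rightarrow> nat \<Rightarrow> bit) \<Rightarrow> (nat \<Rightarrow> bit) set" where
  "G_left n a k W = projS (sitesC a k) `
     span2 {(mulv n W ^^ t) l | t l. l \<in> supp_on n (sitesL a)}"

definition G_right :: "nat \<Rightarrow> nat \<Rightarrow> nat \<Rightarrow> (nat \<Rightarrow> nat \<Rightarrow> bit) \<Rightarrow> (nat \<Rightarrow> bit) set" where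
  "G_right n a k W = projS (sitesC a k) `
     span2 {(mulv n W ^^ t) r | t r. r \<in> supp_on n (sitesR n a k)}"

end

theory Submission imports Defs begin

definition pt :: "nat \<Rightarrow> nat" where "pt i = (if even i then Suc i else i - 1)"

lemma pt_pt[simp]: "pt (pt i) = i" by (auto simp: pt_def)
lemma pt_div[simp]: "pt i div 2 = i div 2" by (auto simp: pt_def elim!: evenE oddE)
lemma pt_lt[simp]: "(pt i < 2*n) = (i < 2*n)" by (auto simp: pt_def elim!: evenE oddE)

lemma Jmat_alt: "Jmat n i j = (if i < 2*n \<and> j = pt i then 1 else 0)"
proof -
  have "(i div 2 = j div 2 \<and> i \<noteq> j) = (j = pt i)"
    by (auto simp: pt_def elim!: evenE oddE)
  then show ?thesis unfolding Jmat_def by auto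
qed

lemma symp_alt: "symp_form n u v = (\<Sum>i<2*n. u i * v (pt i))"
proof -
  have "(\<Sum>j<2*n. u i * Jmat n i j * v j) = u i * v (pt i)" if "i < 2*n" for i
  proof -
    have "(\<Sum>j<2*n. u i * Jmat n i j * v j) = (\<Sum>j<2*n. if j = pt i then u i * v (pt i) else 0)"
      by (rule sum.cong) (auto simp: Jmat_alt that)
    also have "\<dots> = u i * v (pt i)" using that by (simp add: sum.delta)
    finally show ?thesis .
  qed
  then show ?thesis unfolding symp_form_def by simp
qed

lemma bit_UNIV: "(UNIV :: bit set) = {0,1}" by (auto intro: bit.exhaust)
instance bit :: finite by standard (simp add: bit_UNIV)

lemma finite_vecs: "finite (vecs n)"
proof -
  have "vecs n \<subseteq> (\<lambda>xs i. if i < 2*n then xs ! i else 0) ` {xs. set xs \<subseteq> UNIV \<and> length xs = 2*n}"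
  proof
    fix v assume v: "v \<in> vecs n"
    show "v \<in> (\<lambda>xs i. if i < 2*n then xs ! i else 0) ` {xs. set xs \<subseteq> UNIV \<and> length xs = 2*n}"
      by (rule image_eqI[of _ _ "map v [0..<2*n]"]) (use v in \<open>auto simp: vecs_def\<close>)
  qed
  then show ?thesis by (rule finite_subset) (intro finite_imageI finite_lists_length_eq, simp)
qed

definition dot :: "nat \<Rightarrow> (nat \<Rightarrow> bit) \<Rightarrow> (nat \<Rightarrow> bit) \<Rightarrow> bit" where
  "dot n u v = (\<Sum>i<2*n. u i * v i)"
definition Jv :: "nat \<Rightarrow> (nat \<Rightarrow> bit) \<Rightarrow> (nat \<Rightarrow> bit)" where
  "Jv n y = (\<lambda>i. if i < 2*n then y (pt i) else 0)"
definition Tv :: "nat \<Rightarrow> (nat \<Rightarrow> nat \<Rightarrow> bit) \<Rightarrow> (nat \<Rightarrow> bit) \<Rightarrow> (nat \<Rightarrow> bit)" where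
  "Tv n W y = (\<lambda>m. if m < 2*n then (\<Sum>j<2*n. W j m * y j) else 0)"

declare mult_bit_eq_and[simp del] add_bit_eq_xor[simp del]

lemma mulv_vecs[simp]: "mulv n W u \<in> vecs n" by (simp add: mulv_def vecs_def)
lemma Jv_vecs[simp]: "Jv n u \<in> vecs n" by (simp add: Jv_def vecs_def)
lemma Tv_vecs[simp]: "Tv n W u \<in> vecs n" by (simp add: Tv_def vecs_def)
lemma Jv_Jv: "v \<in> vecs n \<Longrightarrow> Jv n (Jv n v) = v"
  by (auto simp: Jv_def vecs_def fun_eq_iff)

lemma symp_dot: "symp_form n u v = dot n u (Jv n v)"
  unfolding symp_alt dot_def Jv_def by (rule sum.cong) auto

lemma dot_adj: "dot n (mulv n W u) z = dot n u (Tv n W z)"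
proof -
  have "dot n (mulv n W u) z = (\<Sum>i<2*n. \<Sum>j<2*n. W i j * u j * z i)"
    unfolding dot_def mulv_def by (simp add: sum_distrib_right)
  also have "\<dots> = (\<Sum>j<2*n. \<Sum>i<2*n. W i j * u j * z i)" by (rule sum.swap)
  also have "\<dots> = dot n u (Tv n W z)"
    unfolding dot_def Tv_def by (simp add: sum_distrib_left mult_ac)
  finally show ?thesis .
qed

lemma WJT:
  assumes "symplectic n W"
  shows "mulv n W (Jv n (Tv n W y)) = Jv n y"
proof (rule ext)
  fix i
  show "mulv n W (Jv n (Tv n W y)) i = Jv n y i"
  proof (cases "i < 2*n")
    case True
    have S: "(\<Sum>l<2*n. W i l * W j (pt l)) = Jmat n i j" if "j < 2*n" for j
    proof -
      have "(\<Sum>l<2*n. \<Sum>m<2*n. W i l * Jmat n l m * W j m) = Jmat n i j"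
        using assms True that unfolding symplectic_def by blast
      moreover have "(\<Sum>m<2*n. W i l * Jmat n l m * W j m) = W i l * W j (pt l)" if "l < 2*n" for l
      proof -
        have "(\<Sum>m<2*n. W i l * Jmat n l m * W j m) = (\<Sum>m<2*n. if m = pt l then W i l * W j (pt l) else 0)"
          by (rule sum.cong) (auto simp: Jmat_alt that)
        also have "\<dots> = W i l * W j (pt l)" using that by (simp add: sum.delta)
        finally show ?thesis .
      qed
      ultimately show ?thesis by simp
    qed
    have "mulv n W (Jv n (Tv n W y)) i = (\<Sum>l<2*n. W i l * (\<Sum>j<2*n. W j (pt l) * y j))"
      using True unfolding mulv_def Jv_def Tv_def by simp
    also have "\<dots> = (\<Sum>l<2*n. \<Sum>j<2*n. W i l * W j (pt l) * y j)"
      by (simp add: sum_distrib_left mult_ac)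
    also have "\<dots> = (\<Sum>j<2*n. \<Sum>l<2*n. W i l * W j (pt l) * y j)" by (rule sum.swap)
    also have "\<dots> = (\<Sum>j<2*n. Jmat n i j * y j)"
      by (rule sum.cong) (simp_all add: S sum_distrib_right[symmetric])
    also have "\<dots> = (\<Sum>j<2*n. if j = pt i then y (pt i) else 0)"
      by (rule sum.cong) (auto simp: Jmat_alt True)
    also have "\<dots> = Jv n y i" using True by (simp add: sum.delta Jv_def)
    finally show ?thesis .
  next
    case False
    then show ?thesis by (simp add: mulv_def Jv_def)
  qed
qed

lemma W_inj:
  assumes "symplectic n W"
  shows "inj_on (mulv n W) (vecs n)"
proof (rule finite_surj_inj[OF finite_vecs], rule subsetI)
  fix y assume y: "y \<in> vecs n"
  have "mulv n W (Jv n (Tv n W (Jv n y))) = y" using WJT[OF assms] Jv_Jv[OF y] by simp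
  then show "y \<in> mulv n W ` vecs n" by (metis Jv_vecs image_eqI)
qed

lemma MW:
  assumes "symplectic n W" and v: "v \<in> vecs n"
  shows "Tv n W (Jv n (mulv n W v)) = Jv n v"
proof -
  let ?x = "Jv n (Tv n W (Jv n (mulv n W v)))"
  have "mulv n W ?x = mulv n W v" using WJT[OF assms(1)] Jv_Jv[OF mulv_vecs] by simp
  then have "?x = v" using W_inj[OF assms(1)] v by (meson Jv_vecs inj_onD)
  then have "Jv n ?x = Jv n v" by simp
  then show ?thesis using Jv_Jv[OF Tv_vecs] by simp
qed

lemma pres:
  assumes "symplectic n W" and v: "v \<in> vecs n"
  shows "symp_form n (mulv n W u) (mulv n W v) = symp_form n u v"
  unfolding symp_dot dot_adj MW[OF assms] ..

lemma pow_vecs: "v \<in> vecs n \<Longrightarrow> (mulv n W ^^ t) v \<in> vecs n"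
  by (cases t) auto

lemma pres_pow:
  assumes "symplectic n W" and v: "v \<in> vecs n"
  shows "symp_form n ((mulv n W ^^ t) u) ((mulv n W ^^ t) v) = symp_form n u v"
proof (induction t)
  case 0 then show ?case by simp
next
  case (Suc t)
  then show ?case using pres[OF assms(1) pow_vecs[OF v]] by simp
qed

lemma pow_inj:
  assumes "symplectic n W"
  shows "x \<in> vecs n \<Longrightarrow> y \<in> vecs n \<Longrightarrow> (mulv n W ^^ p) x = (mulv n W ^^ p) y \<Longrightarrow> x = y"
proof (induction p)
  case 0 then show ?case by simp
next
  case (Suc p)
  have "mulv n W ((mulv n W ^^ p) x) = mulv n W ((mulv n W ^^ p) y)" using Suc.prems(3) by simp
  then have "(mulv n W ^^ p) x = (mulv n W ^^ p) y"
    using W_inj[OF assms] pow_vecs[OF Suc.prems(1)] pow_vecs[OF Suc.prems(2)] inj_onD by metis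
  then show ?case using Suc by blast
qed

lemma period:
  assumes "symplectic n W" and v: "v \<in> vecs n"
  shows "\<exists>d\<ge>1. (mulv n W ^^ d) v = v"
proof -
  have "range (\<lambda>t. (mulv n W ^^ t) v) \<subseteq> vecs n" using pow_vecs[OF v] by auto
  then have "finite (range (\<lambda>t. (mulv n W ^^ t) v))" using finite_subset finite_vecs by blast
  then have "\<not> inj (\<lambda>t. (mulv n W ^^ t) v)" using finite_imageD by blast
  then obtain p q where pq: "p \<noteq> q" "(mulv n W ^^ p) v = (mulv n W ^^ q) v"
    unfolding inj_def by blast
  have "\<exists>p q. p < q \<and> (mulv n W ^^ p) v = (mulv n W ^^ q) v"
    using pq by (metis linorder_neqE_nat)
  then obtain p q where pq: "p < q" "(mulv n W ^^ p) v = (mulv n W ^^ q) v" by blast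
  have "(mulv n W ^^ q) v = (mulv n W ^^ p) ((mulv n W ^^ (q - p)) v)"
    using pq(1) by (metis funpow_add le_add_diff_inverse less_imp_le o_apply)
  then have "(mulv n W ^^ (q - p)) v = v"
    using pow_inj[OF assms(1) pow_vecs[OF v] v] pq(2) by metis
  then show ?thesis using pq(1) by (intro exI[of _ "q - p"]) auto
qed

lemma period_mult:
  assumes "(f ^^ d) v = v" shows "(f ^^ (d * m)) v = v"
proof (induction m)
  case 0 then show ?case by simp
next
  case (Suc m)
  have e: "d * Suc m = d * m + d" by simp
  have "(f ^^ (d * Suc m)) v = (f ^^ (d * m)) ((f ^^ d) v)" by (simp only: e funpow_add o_apply)
  then show ?case using assms Suc by simp
qed

lemma disj_supp:
  assumes "x \<in> supp_on n S" "y \<in> supp_on n S'" "S \<inter> S' = {}"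
  shows "symp_form n x y = 0"
  unfolding symp_alt
proof (rule sum.neutral, rule ballI)
  fix i
  show "x i * y (pt i) = 0"
  proof (cases "x i = 0")
    case False
    then have "i div 2 \<in> S" using assms(1) by (auto simp: supp_on_def)
    have "y (pt i) = 0"
    proof (rule ccontr)
      assume "y (pt i) \<noteq> 0"
      then have "pt i div 2 \<in> S'" using assms(2) unfolding supp_on_def by blast
      then show False using \<open>i div 2 \<in> S\<close> assms(3) by auto
    qed
    then show ?thesis by simp
  qed simp
qed

lemma supp_vecs: "x \<in> supp_on n S \<Longrightarrow> x \<in> vecs n" by (simp add: supp_on_def)

lemma supp_mono: "x \<in> supp_on n S \<Longrightarrow> S \<subseteq> S' \<Longrightarrow> x \<in> supp_on n S'"
  by (auto simp: supp_on_def)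

lemma wall_pow:
  assumes "left_wall n a k W" "l \<in> supp_on n (sitesL a)"
  shows "(mulv n W ^^ t) l \<in> supp_on n (sitesL a \<union> sitesC a k)"
proof (cases "t = 0")
  case True then show ?thesis using assms(2) supp_mono by auto
next
  case False then show ?thesis using assms unfolding left_wall_def by auto
qed

lemma key:
  assumes sy: "symplectic n W" and lw: "left_wall n a k W"
    and l: "l \<in> supp_on n (sitesL a)" and r: "r \<in> supp_on n (sitesR n a k)"
  shows "symp_form n ((mulv n W ^^ t) l) ((mulv n W ^^ s) r) = 0"
proof -
  have dis: "(sitesL a \<union> sitesC a k) \<inter> sitesR n a k = {}"
    by (auto simp: sitesL_def sitesC_def sitesR_def)
  have ge: "symp_form n ((mulv n W ^^ t') l) ((mulv n W ^^ s) r) = 0" if "s \<le> t'" for t'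
  proof -
    have "(mulv n W ^^ t') l = (mulv n W ^^ s) ((mulv n W ^^ (t' - s)) l)"
      using that by (metis funpow_add le_add_diff_inverse o_apply)
    then have "symp_form n ((mulv n W ^^ t') l) ((mulv n W ^^ s) r)
        = symp_form n ((mulv n W ^^ (t' - s)) l) r"
      using pres_pow[OF sy supp_vecs[OF r]] by simp
    also have "\<dots> = 0" by (rule disj_supp[OF wall_pow[OF lw l] r dis])
    finally show ?thesis .
  qed
  obtain d where d: "d \<ge> 1" "(mulv n W ^^ d) l = l" using period[OF sy supp_vecs[OF l]] by blast
  have "(mulv n W ^^ t) l = (mulv n W ^^ t) ((mulv n W ^^ (d * s)) l)"
    using period_mult[OF d(2)] by simp
  also have "\<dots> = (mulv n W ^^ (t + d * s)) l" by (simp add: funpow_add)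
  finally have "(mulv n W ^^ t) l = (mulv n W ^^ (t + d * s)) l" .
  moreover have "s \<le> t + d * s" using d(1) by (simp add: trans_le_add2)
  ultimately show ?thesis using ge by simp
qed

lemma left_lin:
  assumes "x \<in> span2 A" "\<forall>u\<in>A. symp_form n u y = 0"
  shows "symp_form n x y = 0"
proof -
  obtain m :: nat and c u where u: "\<forall>i<m. u i \<in> A" and x: "x = (\<lambda>z. \<Sum>i<m. c i * u i z)"
    using assms(1) unfolding span2_def by blast
  have "symp_form n x y = (\<Sum>k<2*n. \<Sum>i<m. c i * (u i k * y (pt k)))"
    unfolding symp_alt x by (simp only: sum_distrib_right mult.assoc)
  also have "\<dots> = (\<Sum>i<m. c i * (\<Sum>k<2*n. u i k * y (pt k)))"
    by (subst sum.swap) (simp add: sum_distrib_left)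
  also have "\<dots> = 0" using u assms(2) by (simp add: symp_alt)
  finally show ?thesis .
qed

lemma right_lin:
  assumes "y \<in> span2 B" "\<forall>w\<in>B. symp_form n x w = 0"
  shows "symp_form n x y = 0"
proof -
  obtain m :: nat and c u where u: "\<forall>i<m. u i \<in> B" and y: "y = (\<lambda>z. \<Sum>i<m. c i * u i z)"
    using assms(1) unfolding span2_def by blast
  have "symp_form n x y = (\<Sum>k<2*n. \<Sum>i<m. c i * (x k * u i (pt k)))"
    unfolding symp_alt y by (simp add: sum_distrib_left mult_ac)
  also have "\<dots> = (\<Sum>i<m. c i * (\<Sum>k<2*n. x k * u i (pt k)))"
    by (subst sum.swap) (simp add: sum_distrib_left)
  also have "\<dots> = 0" using u assms(2) by (simp add: symp_alt)
  finally show ?thesis .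
qed

lemma span_supp:
  assumes "x \<in> span2 A" "A \<subseteq> supp_on n S"
  shows "x \<in> supp_on n S"
proof -
  obtain m :: nat and c u where u: "\<forall>i<m. u i \<in> A" and x: "x = (\<lambda>z. \<Sum>i<m. c i * u i z)"
    using assms(1) unfolding span2_def by blast
  have us: "u i \<in> supp_on n S" if "i < m" for i using u assms(2) that by blast
  show ?thesis unfolding supp_on_def vecs_def
  proof (intro CollectI conjI allI impI)
    fix j assume "2 * n \<le> j"
    then show "x j = 0" unfolding x using us by (simp add: supp_on_def vecs_def)
  next
    fix j assume "x j \<noteq> 0"
    then obtain i where "i < m" "c i * u i j \<noteq> 0" unfolding x
      by (metis (no_types, lifting) lessThan_iff sum.neutral)
    then show "j div 2 \<in> S" using us[of i] by (auto simp: supp_on_def)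
  qed
qed

theorem lemma5:
  fixes n a k :: nat and W :: "nat \<Rightarrow> nat \<Rightarrow> bit"
  assumes "n \<ge> 3" and "a \<ge> 1" and "k \<ge> 1" and "a + k < n"
    and "symplectic n W"
    and "left_wall n a k W"
  shows "\<forall>g\<in>G_left n a k W. \<forall>g'\<in>G_right n a k W. symp_form n g g' = 0"
proof (intro ballI)
  fix g g' assume g: "g \<in> G_left n a k W" and g': "g' \<in> G_right n a k W"
  let ?A = "{(mulv n W ^^ t) l | t l. l \<in> supp_on n (sitesL a)}"
  let ?B = "{(mulv n W ^^ t) r | t r. r \<in> supp_on n (sitesR n a k)}"
  obtain x where x: "x \<in> span2 ?A" "g = projS (sitesC a k) x"
    using g unfolding G_left_def by blast
  obtain y where y: "y \<in> span2 ?B" "g' = projS (sitesC a k) y"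
    using g' unfolding G_right_def by blast
  have AB: "\<forall>u\<in>?A. \<forall>w\<in>?B. symp_form n u w = 0"
    using key[OF assms(5,6)] by blast
  have uy: "symp_form n u y = 0" if "u \<in> ?A" for u
    using right_lin[OF y(1)] AB that by blast
  have xy: "symp_form n x y = 0" by (rule left_lin[OF x(1)]) (use uy in blast)
  have xs: "x \<in> supp_on n (sitesL a \<union> sitesC a k)"
    by (rule span_supp[OF x(1)]) (use wall_pow[OF assms(6)] in blast)
  have yL: "y i = 0" if "i div 2 < a" for i
  proof -
    let ?l = "\<lambda>j. if j = pt i then 1 else (0::bit)"
    have "i < 2 * n" using that assms(4) by linarith
    then have pl: "pt i < 2 * n" by simp
    have "?l \<in> vecs n" unfolding vecs_def
    proof (intro CollectI allI impI)
      fix j assume "2 * n \<le> j" then show "?l j = 0" using pl by (simp del: pt_lt)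
    qed
    then have "?l \<in> supp_on n (sitesL a)"
      using that by (auto simp: supp_on_def sitesL_def)
    then have "\<exists>t l'. ?l = (mulv n W ^^ t) l' \<and> l' \<in> supp_on n (sitesL a)"
      by (intro exI[of _ 0] exI[of _ ?l]) simp
    then have "?l \<in> ?A" by (simp only: mem_Collect_eq)
    then have "symp_form n ?l y = 0" by (rule uy)
    moreover have "symp_form n ?l y = y i"
    proof -
      have "symp_form n ?l y = (\<Sum>j<2*n. if j = pt i then y (pt j) else 0)"
        unfolding symp_alt by (rule sum.cong) auto
      also have "\<dots> = y i" using \<open>i < 2 * n\<close> by (simp add: sum.delta)
      finally show ?thesis .
    qed
    ultimately show ?thesis by simp
  qed
  have "symp_form n g g' = symp_form n x y"
    unfolding symp_alt x(2) y(2)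
  proof (rule sum.cong[OF refl])
    fix i assume "i \<in> {..<2*n}"
    show "projS (sitesC a k) x i * projS (sitesC a k) y (pt i) = x i * y (pt i)"
    proof (cases "i div 2 \<in> sitesC a k")
      case True then show ?thesis by (simp add: projS_def)
    next
      case False
      show ?thesis
      proof (cases "i div 2 < a")
        case True then show ?thesis using yL[of "pt i"] by (simp add: projS_def)
      next
        case F2: False
        have "x i = 0"
        proof (rule ccontr)
          assume "x i \<noteq> 0"
          then have "i div 2 \<in> sitesL a \<union> sitesC a k" using xs unfolding supp_on_def by blast
          then show False using False F2 by (simp add: sitesL_def)
        qed
        then show ?thesis by (simp add: projS_def)
      qed
    qed
  qed
  then show "symp_form n g g' = 0" using xy by simp
qed

end
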